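(* Let $f:[0,1)\to\mathbb{R}$ be a function such that for every positive integer $n$, every real $t\in[0,n)$ and every $p\in[0,1]$, \[ \mathbb{E}\big[\exp(t\cdot V_{n,2,(p,1-p)})\big]\leq f(t/n). \] Let $k\geq 2$ be an integer, $n$ a positive integer, and $P=(p_1,\dots,p_k)$ a probability distribution on a set of size $k$. Then for all $0\leq t<n$, \[ \mathbb{E}\big[\exp(t\cdot V_{n,k,P})\big]\leq f(t/n)^{k-1}. \]
   Context: For a positive integer $n$, an integer $k\geq 2$ and a probability distribution $P=(p_1,\dots,p_k)$ on $\{1,\dots,k\}$, let $X=(X_1,\dots,X_k)$ be multinomially distributed with $n$ samples and probabilities $P$, and define $V_{n,k,P}=D\big((X_1/n,\dots,X_k/n)\,\|\,(p_1,\dots,p_k)\big)$, where $D\big((q_i)_i\,\|\,(p_i)_i\big)=\sum_i q_i\log\frac{q_i}{p_i}$ is the Kullback--Leibler divergence (natural logarithm, convention $0\log(0/p)=0$). In particular $V_{n,2,(p,1-p)}=D\big((B/n,1-B/n)\,\|\,(p,1-p)\big)$ with $B\sim\mathrm{Binom}(n,p)$. *)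

theory Defs
  imports "HOL-Probability.Probability"
begin

definition KL :: "nat \<Rightarrow> (nat \<Rightarrow> real) \<Rightarrow> (nat \<Rightarrow> real) \<Rightarrow> real" where
  "KL k q p = (\<Sum>i<k. if q i = 0 then 0 else q i * ln (q i / p i))"

definition count_vectors :: "nat \<Rightarrow> nat \<Rightarrow> (nat \<Rightarrow> nat) set" where
  "count_vectors n k = {x \<in> {..<k} \<rightarrow>\<^sub>E {..n}. (\<Sum>i<k. x i) = n}"

definition multinomial_expectation ::
  "nat \<Rightarrow> nat \<Rightarrow> (nat \<Rightarrow> real) \<Rightarrow> ((nat \<Rightarrow> nat) \<Rightarrow> real) \<Rightarrow> real" where
  "multinomial_expectation n k p g =
     (\<Sum>x\<in>count_vectors n k.
        (fact n / (\<Prod>i<k. fact (x i))) * (\<Prod>i<k. p i ^ x i) * g x)"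

definition V_multi :: "nat \<Rightarrow> nat \<Rightarrow> (nat \<Rightarrow> real) \<Rightarrow> (nat \<Rightarrow> nat) \<Rightarrow> real" where
  "V_multi n k p x = KL k (\<lambda>i. real (x i) / real n) p"

definition V_binom :: "nat \<Rightarrow> real \<Rightarrow> nat \<Rightarrow> real" where
  "V_binom n p b = KL 2 (\<lambda>i. if i = 0 then real b / real n else 1 - real b / real n)
                        (\<lambda>i. if i = 0 then p else 1 - p)"

end

theory Submission
  imports Defs
begin


lemma finite_cv: "finite (count_vectors n k)"
proof -
  have "count_vectors n k \<subseteq> {..<k} \<rightarrow>\<^sub>E {..n}" unfolding count_vectors_def by auto
  thus ?thesis by (rule finite_subset) (simp add: finite_PiE)
qed

lemma cv0: "count_vectors 0 k = {(\<lambda>i\<in>{..<k}. 0)}"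
  unfolding count_vectors_def by (auto simp: PiE_def extensional_def fun_eq_iff)

lemma binom_exp:
  assumes "0 \<le> p" "p \<le> 1"
  shows "measure_pmf.expectation (binomial_pmf n p) g
     = (\<Sum>b\<le>n. real (n choose b) * p ^ b * (1 - p) ^ (n - b) * g b)"
proof -
  have "measure_pmf.expectation (binomial_pmf n p) g = (\<Sum>b\<le>n. g b * pmf (binomial_pmf n p) b)"
    apply (rule integral_measure_pmf_real)
    using assms by (auto simp: set_pmf_binomial_eq split: if_splits)
  thus ?thesis using assms by (simp add: mult.commute)
qed

lemma cv_upd: assumes b: "b \<le> n" and y: "y \<in> count_vectors (n-b) k"
  shows "y(k:=b) \<in> count_vectors n (Suc k)"
proof -
  have s: "(\<Sum>i<k. (y(k:=b)) i) = (\<Sum>i<k. y i)" by (rule sum.cong) auto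
  show ?thesis
      using b y unfolding count_vectors_def by (auto simp: PiE_def extensional_def s Pi_def less_Suc_eq)
qed

lemma cv_split: assumes x: "x \<in> count_vectors n (Suc k)"
  shows "x k \<le> n" "x(k:=undefined) \<in> count_vectors (n - x k) k"
proof -
  have s: "(\<Sum>i<k. (x(k:=undefined)) i) = (\<Sum>i<k. x i)" by (rule sum.cong) auto
  from x show "x k \<le> n" unfolding count_vectors_def by auto
  from x show "x(k:=undefined) \<in> count_vectors (n - x k) k"
    unfolding count_vectors_def by (auto simp: PiE_def extensional_def s Pi_def intro: member_le_sum)
qed

lemma cv_bij: "bij_betw (\<lambda>(b,y). y(k:=b)) (SIGMA b:{..n}. count_vectors (n-b) k) (count_vectors n (Suc k))"
  apply (rule bij_betw_byWitness[where f' = "\<lambda>x. (x k, x(k:=undefined))"])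
  apply (auto simp: count_vectors_def PiE_def extensional_def fun_eq_iff)[1]
  apply auto[1]
  using cv_upd apply auto[1]
  using cv_split apply auto
  done


definition Tm :: "real \<Rightarrow> real \<Rightarrow> real \<Rightarrow> real" where
  "Tm a N q = (if a = 0 then 0 else a * ln (a / N / q))"

lemma KL_scaled: assumes "N > 0"
  shows "N * KL k (\<lambda>i. a i / N) p = (\<Sum>i<k. Tm (a i) N (p i))"
  unfolding KL_def sum_distrib_left Tm_def
  by (rule sum.cong) (use assms in auto)

lemma V_multi_eq: assumes "n > 0"
  shows "real n * V_multi n k P x = (\<Sum>i<k. Tm (real (x i)) (real n) (P i))"
  unfolding V_multi_def using assms by (intro KL_scaled) auto

lemma V_binom_eq: assumes "n > 0" "b \<le> n"
  shows "real n * V_binom n p b = Tm (real b) n p + Tm (real (n - b)) n (1 - p)"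
proof -
  have "real n * V_binom n p b = real n * KL 2 (\<lambda>i. (if i = 0 then real b else real (n - b)) / real n)
            (\<lambda>i. if i = 0 then p else 1 - p)"
    unfolding V_binom_def using assms
    by (intro arg_cong[where f="\<lambda>q. real n * KL 2 q _"]) (auto simp: fun_eq_iff of_nat_diff diff_divide_distrib)
  also have "\<dots> = (\<Sum>i<(2::nat). Tm (if i = 0 then real b else real (n - b)) n (if i = 0 then p else 1 - p))"
    using assms by (subst KL_scaled) (auto intro!: sum.cong)
  also have "\<dots> = Tm (real b) n p + Tm (real (n - b)) n (1 - p)"
    by (simp add: numeral_2_eq_2)
  finally show ?thesis .
qed


definition W :: "nat \<Rightarrow> nat \<Rightarrow> (nat \<Rightarrow> real) \<Rightarrow> (nat \<Rightarrow> nat) \<Rightarrow> real" where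
  "W n k P x = fact n / (\<Prod>i<k. fact (x i)) * (\<Prod>i<k. P i ^ x i)"

lemma P_scale:
  fixes P :: "nat \<Rightarrow> real"
  assumes hP: "\<And>i. i < Suc k \<Longrightarrow> P i \<ge> 0" and hs: "(\<Sum>i<Suc k. P i) = 1" and i: "i < k"
  shows "P i = (1 - P k) * (P i / (1 - P k))"
proof (cases "1 - P k = 0")
  case True
  have "(\<Sum>i<k. P i) + P k = 1" using hs by simp
  hence "(\<Sum>i<k. P i) = 0" using True by linarith
  hence "P i = 0" using hP i by (subst (asm) sum_nonneg_eq_0_iff) auto
  thus ?thesis by simp
qed simp

lemma weight_split:
  assumes hP: "\<And>i. i < Suc k \<Longrightarrow> P i \<ge> 0" and hs: "(\<Sum>i<Suc k. P i) = 1"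
    and b: "b \<le> n" and y: "y \<in> count_vectors (n-b) k"
  shows "W n (Suc k) P (y(k:=b)) =
    (real (n choose b) * P k ^ b * (1 - P k) ^ (n - b)) * W (n-b) k (\<lambda>i. P i / (1 - P k)) y"
proof -
  define q where "q = 1 - P k"
  have sy: "(\<Sum>i<k. y i) = n - b" using y unfolding count_vectors_def by auto
  have p1: "(\<Prod>i<Suc k. fact ((y(k:=b)) i)) = (\<Prod>i<k. fact (y i)) * (fact b :: real)"
    by (simp add: prod.lessThan_Suc)
  have p2: "(\<Prod>i<Suc k. P i ^ (y(k:=b)) i) = (\<Prod>i<k. P i ^ y i) * P k ^ b"
    by (simp add: prod.lessThan_Suc)
  have "(\<Prod>i<k. P i ^ y i) = (\<Prod>i<k. (q * (P i / q)) ^ y i)"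
    using P_scale[OF hP hs] unfolding q_def by (intro prod.cong) auto
  also have "\<dots> = (\<Prod>i<k. q ^ y i) * (\<Prod>i<k. (P i / q) ^ y i)"
    by (simp only: power_mult_distrib prod.distrib)
  also have "(\<Prod>i<k. q ^ y i) = q ^ (n - b)" by (simp add: power_sum[symmetric] sy)
  finally have p3: "(\<Prod>i<k. P i ^ y i) = q ^ (n - b) * (\<Prod>i<k. (P i / q) ^ y i)" .
  have pf: "(\<Prod>i<k. fact (y i)) \<noteq> (0::real)" by simp
  show ?thesis unfolding W_def p1 p2 p3 binomial_fact[OF b] q_def[symmetric]
    using pf by (simp add: field_simps)
qed


lemma log_split:
  fixes P :: "nat \<Rightarrow> real"
  assumes hP: "\<And>i. i < Suc k \<Longrightarrow> P i \<ge> 0" and hs: "(\<Sum>i<Suc k. P i) = 1"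
    and b: "b \<le> n" and n: "n > 0" and y: "y \<in> count_vectors (n-b) k"
    and Wnz: "W n (Suc k) P (y(k:=b)) \<noteq> 0"
  shows "real n * V_multi n (Suc k) P (y(k:=b)) = real n * V_binom n (P k) b
           + real (n-b) * V_multi (n-b) k (\<lambda>i. P i / (1 - P k)) y"
proof -
  define q where "q = 1 - P k"
  have sy: "(\<Sum>i<k. y i) = n - b" using y unfolding count_vectors_def by auto
  have hsk: "(\<Sum>i<k. P i) = q" using hs unfolding q_def by simp
  have "(\<Prod>i<Suc k. P i ^ (y(k:=b)) i) \<noteq> 0" using Wnz unfolding W_def by auto
  hence pos: "P i > 0" if "i < k" "y i > 0" for i
    using that hP[of i] by (auto simp: prod.lessThan_Suc order_le_less)
  have L: "real n * V_multi n (Suc k) P (y(k:=b)) = (\<Sum>i<k. Tm (real (y i)) n (P i)) + Tm (real b) n (P k)"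
    using n by (simp add: V_multi_eq prod.lessThan_Suc)
  have B: "real n * V_binom n (P k) b = Tm (real b) n (P k) + Tm (real (n - b)) n q"
    using V_binom_eq[OF n b] q_def by simp
  show ?thesis
  proof (cases "n - b = 0")
    case True
    hence "y i = 0" if "i < k" for i using sy that by (simp add: sum_eq_0_iff)
    hence "(\<Sum>i<k. Tm (real (y i)) n (P i)) = 0" by (simp add: Tm_def)
    thus ?thesis using L B True by (simp add: Tm_def)
  next
    case False
    hence nb: "n - b > 0" by simp
    have R: "real (n-b) * V_multi (n-b) k (\<lambda>i. P i / q) y = (\<Sum>i<k. Tm (real (y i)) (real (n-b)) (P i / q))"
      using V_multi_eq[OF nb] .
    obtain j where j: "j < k" "y j > 0"
    proof (rule ccontr)
      assume "\<not> thesis"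
      hence "\<forall>i<k. y i = 0" using that by auto
      hence "(\<Sum>i<k. y i) = 0" by simp
      thus False using sy nb by simp
    qed
    have "P j \<le> q" unfolding hsk[symmetric] using j hP by (intro member_le_sum) auto
    hence qpos: "q > 0" using pos[OF j] by simp
    define K where "K = ln (real (n-b) / n / q)"
    have tm_eq: "Tm (real (y i)) n (P i) = real (y i) * K + Tm (real (y i)) (real (n-b)) (P i / q)" if "i < k" for i
    proof (cases "y i = 0")
      case False
      hence yp: "y i > 0" by simp
      have Pp: "P i > 0" using pos[OF that yp] .
      define A where "A = real (y i) / real (n-b) / (P i / q)"
      define B where "B = real (n-b) / n / q"
      have eq: "real (y i) / n / P i = A * B"
        unfolding A_def B_def using nb n qpos Pp by (simp add: field_simps)
      have "A > 0" "B > 0" unfolding A_def B_def using nb n qpos Pp yp by auto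
      hence "ln (A * B) = ln A + ln B" by (rule ln_mult_pos)
      hence "ln (real (y i) / n / P i) = ln (real (y i) / real (n-b) / (P i / q)) + K"
        unfolding eq K_def by (simp add: A_def B_def)
      thus ?thesis using False by (simp add: Tm_def algebra_simps)
    qed (simp add: Tm_def)
    have "(\<Sum>i<k. Tm (real (y i)) n (P i)) = (\<Sum>i<k. real (y i)) * K + (\<Sum>i<k. Tm (real (y i)) (real (n-b)) (P i / q))"
      by (simp add: tm_eq sum.distrib sum_distrib_right)
    also have "(\<Sum>i<k. real (y i)) = real (n - b)" using sy by (metis of_nat_sum)
    also have "real (n - b) * K = Tm (real (n - b)) n q" unfolding K_def Tm_def using nb by simp
    finally show ?thesis using L B R q_def by simp
  qed
qed


definition Mx :: "nat \<Rightarrow> nat \<Rightarrow> (nat \<Rightarrow> real) \<Rightarrow> real \<Rightarrow> real" where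
  "Mx n k P c = multinomial_expectation n k P (\<lambda>x. exp (real n * c * V_multi n k P x))"

lemma Mx_sum: "Mx n k P c = (\<Sum>x\<in>count_vectors n k. W n k P x * exp (real n * c * V_multi n k P x))"
  unfolding Mx_def multinomial_expectation_def W_def by simp

lemma Mx0: "Mx 0 k P c = 1"
  unfolding Mx_sum cv0 W_def by simp

lemma cv1: "count_vectors n (Suc 0) = {(\<lambda>i\<in>{..<Suc 0}. n)}"
  unfolding count_vectors_def by (auto simp: PiE_def extensional_def fun_eq_iff)

lemma Mx1: assumes "P 0 = 1" shows "Mx n (Suc 0) P c = 1"
proof (cases "n = 0")
  case True thus ?thesis by (simp add: Mx0)
next
  case False
  thus ?thesis unfolding Mx_sum cv1 W_def using assms
    by (simp add: V_multi_def KL_def)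
qed

lemma main:
  fixes F c :: real
  assumes hF: "\<And>m p. m > 0 \<Longrightarrow> 0 \<le> p \<Longrightarrow> p \<le> 1 \<Longrightarrow>
      measure_pmf.expectation (binomial_pmf m p) (\<lambda>b. exp (real m * c * V_binom m p b)) \<le> F"
    and F1: "F \<ge> 1"
  shows "(\<And>i. i < Suc k \<Longrightarrow> P i \<ge> 0) \<Longrightarrow> (\<Sum>i<Suc k. P i) = 1 \<Longrightarrow> Mx n (Suc k) P c \<le> F ^ k"
proof (induction k arbitrary: n P)
  case 0
  thus ?case by (simp add: Mx1)
next
  case (Suc k)
  note hP = Suc.prems(1) and hs = Suc.prems(2)
  define K where "K = Suc k"
  define p where "p = P K"
  define P' where "P' = (\<lambda>i. P i / (1 - p))"
  have Fk: "F ^ k \<ge> 1" using F1 by (simp add: one_le_power)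
  show ?case
  proof (cases "n = 0")
    case True
    have "F ^ Suc k \<ge> 1" by (rule one_le_power[OF F1])
    thus ?thesis using True by (simp only: Mx0)
  next
    case False
    hence n: "n > 0" by simp
    have hPK: "\<And>i. i < Suc K \<Longrightarrow> P i \<ge> 0" and hsK: "(\<Sum>i<Suc K. P i) = 1"
      using hP hs unfolding K_def by auto
    have p0: "p \<ge> 0" unfolding p_def using hPK by simp
    have "p \<le> (\<Sum>i<Suc K. P i)" unfolding p_def using hPK by (intro member_le_sum) auto
    hence p1: "p \<le> 1" using hsK by simp
    define wb where "wb = (\<lambda>b. real (n choose b) * p ^ b * (1 - p) ^ (n - b) * exp (real n * c * V_binom n p b))"
    have term_eq: "W n (Suc K) P (y(K:=b)) * exp (real n * c * V_multi n (Suc K) P (y(K:=b)))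
        = wb b * (W (n-b) K P' y * exp (real (n-b) * c * V_multi (n-b) K P' y))"
      if b: "b \<le> n" and y: "y \<in> count_vectors (n-b) K" for b y
    proof (cases "W n (Suc K) P (y(K:=b)) = 0")
      case True
      have ws: "W n (Suc K) P (y(K:=b)) = (real (n choose b) * p ^ b * (1 - p) ^ (n - b)) * W (n-b) K P' y"
        using weight_split[OF hPK hsK b y] unfolding p_def P'_def .
      have "wb b * (W (n-b) K P' y * exp (real (n-b) * c * V_multi (n-b) K P' y))
         = ((real (n choose b) * p ^ b * (1 - p) ^ (n - b)) * W (n-b) K P' y) *
           (exp (real n * c * V_binom n p b) * exp (real (n-b) * c * V_multi (n-b) K P' y))"
        unfolding wb_def by (simp add: algebra_simps)
      thus ?thesis unfolding ws[symmetric] True by simp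
    next
      case False
      have ls: "real n * V_multi n (Suc K) P (y(K:=b)) = real n * V_binom n p b
           + real (n-b) * V_multi (n-b) K P' y"
        using log_split[OF hPK hsK b n y False] unfolding p_def P'_def .
      have "exp (real n * c * V_multi n (Suc K) P (y(K:=b))) = exp (real n * c * V_binom n p b) * exp (real (n-b) * c * V_multi (n-b) K P' y)"
        unfolding exp_add[symmetric] using ls by (simp add: algebra_simps)
      thus ?thesis using weight_split[OF hPK hsK b y] unfolding wb_def p_def P'_def by simp
    qed
    have "Mx n (Suc K) P c = (\<Sum>(b,y)\<in>(SIGMA b:{..n}. count_vectors (n-b) K).
              W n (Suc K) P (y(K:=b)) * exp (real n * c * V_multi n (Suc K) P (y(K:=b))))"
      unfolding Mx_sum by (subst sum.reindex_bij_betw[OF cv_bij, symmetric]) (simp add: case_prod_unfold)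
    also have "\<dots> = (\<Sum>b\<le>n. \<Sum>y\<in>count_vectors (n-b) K.
              W n (Suc K) P (y(K:=b)) * exp (real n * c * V_multi n (Suc K) P (y(K:=b))))"
      by (subst sum.Sigma) (auto simp: finite_cv)
    also have "\<dots> = (\<Sum>b\<le>n. wb b * Mx (n-b) K P' c)"
      unfolding Mx_sum sum_distrib_left by (intro sum.cong refl) (simp add: term_eq)
    also have "\<dots> \<le> (\<Sum>b\<le>n. wb b * F ^ k)"
    proof (intro sum_mono)
      fix b assume b: "b \<in> {..n}"
      have wb0: "wb b \<ge> 0" unfolding wb_def using p0 p1 by simp
      show "wb b * Mx (n-b) K P' c \<le> wb b * F ^ k"
      proof (cases "wb b = 0")
        case False
        have "Mx (n-b) K P' c \<le> F ^ k"
        proof (cases "n - b = 0")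
          case True thus ?thesis using Fk by (simp add: Mx0)
        next
          case nb: False
          hence "p \<noteq> 1" using False unfolding wb_def by auto
          hence pl: "p < 1" using p1 by simp
          have "(\<Sum>i<K. P i) + p = 1" using hsK unfolding p_def by simp
          hence "(\<Sum>i<Suc k. P' i) = 1" unfolding P'_def K_def sum_divide_distrib[symmetric]
            using pl by (simp add: K_def)
          moreover have "\<And>i. i < Suc k \<Longrightarrow> P' i \<ge> 0" unfolding P'_def using hP pl by simp
          ultimately show ?thesis unfolding K_def by (rule Suc.IH[rotated])
        qed
        thus ?thesis using wb0 by (rule mult_left_mono)
      qed simp
    qed
    also have "\<dots> = F ^ k * measure_pmf.expectation (binomial_pmf n p) (\<lambda>b. exp (real n * c * V_binom n p b))"
      unfolding binom_exp[OF p0 p1] wb_def sum_distrib_left by (intro sum.cong refl) simp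
    also have "\<dots> \<le> F ^ k * F"
      using hF[OF n p0 p1] Fk by (intro mult_left_mono) auto
    finally show ?thesis by (simp add: K_def mult.commute)
  qed
qed


theorem proposition2p3:
  fixes f :: "real \<Rightarrow> real" and k n :: nat and P :: "nat \<Rightarrow> real" and t :: real
  assumes hf: "\<And>(m::nat) (s::real) (p::real). m > 0 \<Longrightarrow> 0 \<le> s \<Longrightarrow> s < real m \<Longrightarrow>
              0 \<le> p \<Longrightarrow> p \<le> 1 \<Longrightarrow>
              measure_pmf.expectation (binomial_pmf m p) (\<lambda>b. exp (s * V_binom m p b))
                \<le> f (s / real m)"
    and hk: "k \<ge> 2"
    and hn: "n > 0"
    and hP: "\<And>i. i < k \<Longrightarrow> P i \<ge> 0"
    and hPsum: "(\<Sum>i<k. P i) = 1"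
    and ht: "0 \<le> t" "t < real n"
  shows "multinomial_expectation n k P (\<lambda>x. exp (t * V_multi n k P x)) \<le> f (t / real n) ^ (k - 1)"
proof -
  define c where "c = t / real n"
  have c0: "0 \<le> c" and c1: "c < 1" unfolding c_def using ht hn by (auto simp: field_simps)
  have hF: "measure_pmf.expectation (binomial_pmf m p) (\<lambda>b. exp (real m * c * V_binom m p b)) \<le> f c"
    if "m > 0" "0 \<le> p" "p \<le> 1" for m p
  proof -
    have "real m * c < real m" using c1 that by simp
    moreover have "0 \<le> real m * c" using c0 by simp
    ultimately have "measure_pmf.expectation (binomial_pmf m p) (\<lambda>b. exp ((real m * c) * V_binom m p b))
       \<le> f ((real m * c) / real m)" using hf that by blast
    thus ?thesis using that by simp
  qed
  have "measure_pmf.expectation (binomial_pmf n 0) (\<lambda>b. exp (real n * c * V_binom n 0 b)) = 1"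
  proof -
    have "measure_pmf.expectation (binomial_pmf n 0) (\<lambda>b. exp (real n * c * V_binom n 0 b))
       = (\<Sum>b\<in>{0}. exp (real n * c * V_binom n 0 b) * pmf (binomial_pmf n 0) b)"
      by (rule integral_measure_pmf_real) auto
    also have "\<dots> = 1" by (simp add: V_binom_def KL_def numeral_2_eq_2)
    finally show ?thesis .
  qed
  hence F1: "f c \<ge> 1" using hF[OF hn] by fastforce
  obtain j where kj: "k = Suc j" using hk by (cases k) auto
  have "Mx n (Suc j) P c \<le> f c ^ j"
    using main[OF hF F1, of j P n] hP hPsum unfolding kj by blast
  moreover have "real n * c = t" unfolding c_def using hn by simp
  ultimately show ?thesis unfolding Mx_def kj c_def by simp
qed

end
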